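(* Let $G$ be a graph, $X\subseteq V(G)$ with $F:=G-X$ a pseudoforest, and $k$ an integer. Suppose there are distinct $u,v,w\in X$ such that $\{u,v,w\}$ is independent in $G$, $\mathrm{Conf}_F(\{u,v,w\}) \ge |X|$, and there is no anchor triangle $P$ with $N_G(V(P))=\{u,v,w\}$. Let $G'$ be obtained from $G$ by adding three new vertices $p_u,p_v,p_w$ and the edges $p_up_v, p_up_w, p_vp_w, p_uu, p_vv, p_ww$, and let $k' := k+1$. Then $G$ has an independent set of size at least $k$ if and only if $G'$ has an independent set of size at least $k'$.
   Context: All graphs are finite, simple and undirected; a pseudoforest is a graph each of whose connected components contains at most one cycle. $\alpha(H)$ is the independence number of $H$. For a subgraph $F'\subseteq F$ and $X'\subseteq X$, the number of conflicts is $\mathrm{Conf}_{F'}(X') := \alpha(F') - \alpha(F' - N_G(X'))$, where $N_G(X')$ is the set of vertices outside $X'$ adjacent to some vertex of $X'$. An anchor triangle is a connected component $P$ of $F=G-X$ with $V(P)=\{p_1,p_2,p_3\}$ such that there are vertices $x_1,x_2,x_3\in X$ with $N_G(p_1)=\{p_2,p_3,x_1\}$, $N_G(p_2)=\{p_1,p_3,x_2\}$, $N_G(p_3)=\{p_1,p_2,x_3\}$. *)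

theory Defs
  imports Main
begin

text \<open>A finite simple undirected graph: a vertex set and a set of 2-element edges.\<close>
type_synonym 'a graph = "'a set \<times> 'a set set"

definition verts :: "'a graph \<Rightarrow> 'a set" where "verts G = fst G"
definition edges :: "'a graph \<Rightarrow> 'a set set" where "edges G = snd G"

definition wf_graph :: "'a graph \<Rightarrow> bool" where
  "wf_graph G \<longleftrightarrow> finite (verts G) \<and>
     (\<forall>e\<in>edges G. \<exists>x y. x \<noteq> y \<and> x \<in> verts G \<and> y \<in> verts G \<and> e = {x, y})"

definition adj :: "'a graph \<Rightarrow> 'a \<Rightarrow> 'a \<Rightarrow> bool" where
  "adj G x y \<longleftrightarrow> {x, y} \<in> edges G"

definition induced :: "'a graph \<Rightarrow> 'a set \<Rightarrow> 'a graph" where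
  "induced G S = (verts G \<inter> S, {e \<in> edges G. e \<subseteq> S})"

definition delete :: "'a graph \<Rightarrow> 'a set \<Rightarrow> 'a graph" where
  "delete G S = induced G (verts G - S)"

definition nbhd :: "'a graph \<Rightarrow> 'a set \<Rightarrow> 'a set" where
  "nbhd G S = {y \<in> verts G - S. \<exists>x\<in>S. adj G x y}"

definition indep :: "'a graph \<Rightarrow> 'a set \<Rightarrow> bool" where
  "indep G I \<longleftrightarrow> I \<subseteq> verts G \<and> (\<forall>x\<in>I. \<forall>y\<in>I. \<not> adj G x y)"

definition alpha :: "'a graph \<Rightarrow> nat" where
  "alpha G = Max {card I | I. indep G I}"

definition conf :: "'a graph \<Rightarrow> 'a graph \<Rightarrow> 'a set \<Rightarrow> int" where
  "conf G F' X' = int (alpha F') - int (alpha (delete F' (nbhd G X')))"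

definition reach :: "'a graph \<Rightarrow> 'a \<Rightarrow> 'a \<Rightarrow> bool" where
  "reach G x y \<longleftrightarrow> x \<in> verts G \<and> (\<lambda>a b. adj G a b)\<^sup>*\<^sup>* x y"

definition component :: "'a graph \<Rightarrow> 'a set \<Rightarrow> bool" where
  "component G C \<longleftrightarrow> (\<exists>x\<in>verts G. C = {y. reach G x y})"

text \<open>Cycles, given as lists of distinct vertices of length at least 3;
  a cycle (as a subgraph) is identified by its edge set.\<close>
definition is_cycle :: "'a graph \<Rightarrow> 'a list \<Rightarrow> bool" where
  "is_cycle G xs \<longleftrightarrow> length xs \<ge> 3 \<and> distinct xs \<and> set xs \<subseteq> verts G \<and>
     (\<forall>i < length xs. adj G (xs ! i) (xs ! ((i + 1) mod length xs)))"

definition cycle_edges :: "'a list \<Rightarrow> 'a set set" where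
  "cycle_edges xs = {{xs ! i, xs ! ((i + 1) mod length xs)} | i. i < length xs}"

definition pseudoforest :: "'a graph \<Rightarrow> bool" where
  "pseudoforest G \<longleftrightarrow> (\<forall>C. component G C \<longrightarrow>
     (\<forall>xs ys. is_cycle G xs \<and> is_cycle G ys \<and> set xs \<subseteq> C \<and> set ys \<subseteq> C
        \<longrightarrow> cycle_edges xs = cycle_edges ys))"

definition anchor_triangle :: "'a graph \<Rightarrow> 'a set \<Rightarrow> 'a set \<Rightarrow> bool" where
  "anchor_triangle G X P \<longleftrightarrow> component (delete G X) P \<and>
     (\<exists>p1 p2 p3 x1 x2 x3. P = {p1, p2, p3} \<and> p1 \<noteq> p2 \<and> p1 \<noteq> p3 \<and> p2 \<noteq> p3 \<and>
        x1 \<in> X \<and> x2 \<in> X \<and> x3 \<in> X \<and>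
        nbhd G {p1} = {p2, p3, x1} \<and> nbhd G {p2} = {p1, p3, x2} \<and> nbhd G {p3} = {p1, p2, x3})"

definition add_triangle :: "'a graph \<Rightarrow> 'a \<Rightarrow> 'a \<Rightarrow> 'a \<Rightarrow> 'a \<Rightarrow> 'a \<Rightarrow> 'a \<Rightarrow> 'a graph" where
  "add_triangle G u v w pu pv pw =
     (verts G \<union> {pu, pv, pw},
      edges G \<union> {{pu, pv}, {pu, pw}, {pv, pw}, {pu, u}, {pv, v}, {pw, w}})"

end

theory Submission
  imports Defs
begin

lemma alpha_ge:
  assumes "finite (verts H)" "indep H I"
  shows "card I \<le> alpha H"
proof -
  have "{card I | I. indep H I} \<subseteq> {..card (verts H)}"
    using assms(1) by (auto simp: indep_def intro: card_mono)
  hence fin: "finite {card I | I. indep H I}" using finite_subset by blast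
  show ?thesis unfolding alpha_def using assms(2) by (intro Max_ge[OF fin]) blast
qed

lemma alpha_attained:
  assumes "finite (verts H)"
  shows "\<exists>J. indep H J \<and> card J = alpha H"
proof -
  have "{card I | I. indep H I} \<subseteq> {..card (verts H)}"
    using assms(1) by (auto simp: indep_def intro: card_mono)
  hence fin: "finite {card I | I. indep H I}" using finite_subset by blast
  have ne: "{card I | I. indep H I} \<noteq> {}"
    by (rule ccontr) (auto simp: indep_def)
  have "alpha H \<in> {card I | I. indep H I}" unfolding alpha_def using Max_in[OF fin ne] .
  thus ?thesis by auto
qed

lemma card_split: "card I \<le> card (I - A) + card (I \<inter> A)"
proof -
  have "I = (I - A) \<union> (I \<inter> A)" by blast
  hence "card I = card ((I - A) \<union> (I \<inter> A))" by simp
  also have "\<dots> \<le> card (I - A) + card (I \<inter> A)" by (rule card_Un_le)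
  finally show ?thesis .
qed

lemma verts_delete: "verts (delete G S) = verts G - S"
  by (auto simp: delete_def induced_def verts_def)

lemma adj_delete: "adj (delete G S) x y \<Longrightarrow> adj G x y"
  by (auto simp: delete_def induced_def adj_def edges_def)

lemma indep_delete: "indep (delete G S) I \<Longrightarrow> indep G I"
  unfolding indep_def verts_delete
  by (auto simp: adj_def delete_def induced_def edges_def verts_def)

lemma add_vertex:
  assumes wf: "wf_graph G" and I: "indep G I" and uI: "u \<notin> I"
    and "pu \<notin> verts G" "pv \<notin> verts G" "pw \<notin> verts G"
    and "pu \<noteq> pv" "pu \<noteq> pw" "pv \<noteq> pw" "u \<in> verts G"
  shows "indep (add_triangle G u v w pu pv pw) (insert pu I)"
proof -
  have sub: "I \<subseteq> verts G" using I by (simp add: indep_def)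
  have noedge: "\<And>e. e \<in> edges G \<Longrightarrow> e \<subseteq> verts G"
    using wf by (auto simp: wf_graph_def)
  have n1: "pv \<notin> insert pu I" "pw \<notin> insert pu I" "u \<notin> insert pu I"
    using sub assms(4-10) uI by auto
  show ?thesis
    unfolding indep_def
  proof (intro conjI ballI)
    show "insert pu I \<subseteq> verts (add_triangle G u v w pu pv pw)"
      using sub by (auto simp: add_triangle_def verts_def)
  next
    fix x y assume x: "x \<in> insert pu I" and y: "y \<in> insert pu I"
    show "\<not> adj (add_triangle G u v w pu pv pw) x y"
    proof
      assume a: "adj (add_triangle G u v w pu pv pw) x y"
      hence "{x,y} \<in> edges G \<union> {{pu, pv}, {pu, pw}, {pv, pw}, {pu, u}, {pv, v}, {pw, w}}"
        by (simp only: adj_def add_triangle_def edges_def snd_conv)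
      thus False
      proof (rule UnE)
        assume e: "{x,y} \<in> edges G"
        hence "x \<in> verts G" "y \<in> verts G" using noedge by auto
        hence "x \<noteq> pu" "y \<noteq> pu" using assms(4) by auto
        hence "x \<in> I" "y \<in> I" using x y by auto
        thus False using I e by (auto simp: indep_def adj_def)
      next
        assume e: "{x,y} \<in> {{pu, pv}, {pu, pw}, {pv, pw}, {pu, u}, {pv, v}, {pw, w}}"
        have "\<exists>z\<in>{x,y}. z \<notin> insert pu I"
        proof -
          have "\<exists>z\<in>E. z \<notin> insert pu I" if "E \<in> {{pu, pv}, {pu, pw}, {pv, pw}, {pu, u}, {pv, v}, {pw, w}}" for E
            using that n1 by blast
          from this[OF e] show ?thesis .
        qed
        thus False using x y by blast
      qed
    qed
  qed
qed

theorem lemma3: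
  fixes G :: "'a graph" and X :: "'a set" and k :: int
    and u v w pu pv pw :: 'a
  assumes "wf_graph G"
    and "X \<subseteq> verts G"
    and "pseudoforest (delete G X)"
    and "u \<in> X" "v \<in> X" "w \<in> X" "u \<noteq> v" "u \<noteq> w" "v \<noteq> w"
    and "indep G {u, v, w}"
    and "conf G (delete G X) {u, v, w} \<ge> int (card X)"
    and "\<not> (\<exists>P. anchor_triangle G X P \<and> nbhd G P = {u, v, w})"
    and "pu \<notin> verts G" "pv \<notin> verts G" "pw \<notin> verts G"
    and "pu \<noteq> pv" "pu \<noteq> pw" "pv \<noteq> pw"
  shows "(\<exists>I. indep G I \<and> int (card I) \<ge> k) \<longleftrightarrow>
         (\<exists>I. indep (add_triangle G u v w pu pv pw) I \<and> int (card I) \<ge> k + 1)"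
proof
  have finV: "finite (verts G)" using assms(1) by (simp add: wf_graph_def)
  have uV: "u \<in> verts G" "v \<in> verts G" "w \<in> verts G" using assms(2,4-6) by auto
  assume "\<exists>I. indep G I \<and> int (card I) \<ge> k"
  then obtain I where I: "indep G I" "int (card I) \<ge> k" by blast
  have subI: "I \<subseteq> verts G" using I by (simp add: indep_def)
  have finI: "finite I" using subI finV finite_subset by blast
  show "\<exists>I. indep (add_triangle G u v w pu pv pw) I \<and> int (card I) \<ge> k + 1"
  proof (cases "u \<in> I \<and> v \<in> I \<and> w \<in> I")
    case False
    then consider "u \<notin> I" | "v \<notin> I" | "w \<notin> I" by blast
    thus ?thesis
    proof cases
      case 1
      have "indep (add_triangle G u v w pu pv pw) (insert pu I)"
        by (rule add_vertex) (use assms(1,13-18) I 1 uV in simp_all)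
      moreover have "card (insert pu I) = card I + 1" using finI subI assms(13-15) by (auto simp: card_insert_if)
      ultimately show ?thesis using I by (intro exI[of _ "insert pu I"]) auto
    next
      case 2
      have "indep (add_triangle G v u w pv pu pw) (insert pv I)"
        by (rule add_vertex) (use assms(1,13-18) I 2 uV in simp_all)
      moreover have "add_triangle G v u w pv pu pw = add_triangle G u v w pu pv pw"
        by (auto simp: add_triangle_def insert_commute)
      moreover have "card (insert pv I) = card I + 1" using finI subI assms(13-15) by (auto simp: card_insert_if)
      ultimately show ?thesis using I by (intro exI[of _ "insert pv I"]) auto
    next
      case 3
      have "indep (add_triangle G w v u pw pv pu) (insert pw I)"
        by (rule add_vertex) (use assms(1,13-18) I 3 uV in simp_all)
      moreover have "add_triangle G w v u pw pv pu = add_triangle G u v w pu pv pw"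
        by (auto simp: add_triangle_def insert_commute)
      moreover have "card (insert pw I) = card I + 1" using finI subI assms(13-15) by (auto simp: card_insert_if)
      ultimately show ?thesis using I by (intro exI[of _ "insert pw I"]) auto
    qed
  next
    case True
    define F where "F = delete G X"
    define F2 where "F2 = delete F (nbhd G {u,v,w})"
    have finF: "finite (verts F)" using finV by (simp add: F_def verts_delete)
    have finF2: "finite (verts F2)" using finF by (simp add: F2_def verts_delete)
    have "indep F2 (I - X)"
      unfolding indep_def
    proof (intro conjI ballI)
      show "I - X \<subseteq> verts F2"
      proof
        fix y assume y: "y \<in> I - X"
        have "y \<notin> nbhd G {u,v,w}"
          using y True I by (auto simp: nbhd_def indep_def)
        thus "y \<in> verts F2" using y subI by (auto simp: F2_def F_def verts_delete)
      qed
    next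
      fix x y assume "x \<in> I - X" "y \<in> I - X"
      thus "\<not> adj F2 x y" using I unfolding F2_def F_def
        by (auto simp: indep_def dest!: adj_delete)
    qed
    hence c1: "card (I - X) \<le> alpha F2" using alpha_ge finF2 by blast
    have "card I \<le> card (I - X) + card (I \<inter> X)"
      by (rule card_split)
    also have "card (I \<inter> X) \<le> card X"
      using assms(2) finV by (meson card_mono finite_subset inf_le2)
    finally have "int (card I) \<le> int (alpha F2) + int (card X)" using c1 by linarith
    moreover have "int (card X) \<le> int (alpha F) - int (alpha F2)"
      using assms(11) by (simp add: conf_def F_def F2_def)
    ultimately have c2: "int (card I) \<le> int (alpha F)" by linarith
    obtain J where J: "indep F J" "card J = alpha F" using alpha_attained[OF finF] by blast
    have JG: "indep G J" using J(1) by (simp add: F_def indep_delete)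
    have uJ: "u \<notin> J" using J(1) assms(4) by (auto simp: F_def indep_def verts_delete)
    have finJ: "finite J" using JG finV by (meson finite_subset indep_def)
    have "indep (add_triangle G u v w pu pv pw) (insert pu J)"
      by (rule add_vertex) (use assms(1,13-18) JG uJ uV in simp_all)
    moreover have "card (insert pu J) = card J + 1"
      using finJ JG assms(13) by (auto simp: indep_def card_insert_if)
    ultimately show ?thesis using I c2 J by (intro exI[of _ "insert pu J"]) auto
  qed
next
  assume "\<exists>I. indep (add_triangle G u v w pu pv pw) I \<and> int (card I) \<ge> k + 1"
  then obtain I where I: "indep (add_triangle G u v w pu pv pw) I" "int (card I) \<ge> k + 1"
    by blast
  let ?G' = "add_triangle G u v w pu pv pw"
  have finV: "finite (verts G)" using assms(1) by (simp add: wf_graph_def)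
  have subI: "I \<subseteq> verts G \<union> {pu,pv,pw}" using I by (simp add: indep_def add_triangle_def verts_def)
  have finI: "finite I" using subI finV finite_subset by blast
  have adjs: "adj ?G' pu pv" "adj ?G' pu pw" "adj ?G' pv pw"
    by (auto simp: adj_def add_triangle_def edges_def)
  have atmost: "card (I \<inter> {pu,pv,pw}) \<le> 1"
  proof -
    have "\<forall>a\<in>I \<inter> {pu,pv,pw}. \<forall>b\<in>I \<inter> {pu,pv,pw}. a = b"
    proof (intro ballI)
      fix a b assume a: "a \<in> I \<inter> {pu,pv,pw}" and b: "b \<in> I \<inter> {pu,pv,pw}"
      have adjs2: "adj ?G' pv pu" "adj ?G' pw pu" "adj ?G' pw pv"
        using adjs by (simp_all add: adj_def insert_commute)
      show "a = b"
      proof (rule ccontr)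
        assume ne: "a \<noteq> b"
        have "adj ?G' a b" using a b ne adjs adjs2 by auto
        moreover have "a \<in> I" "b \<in> I" using a b by auto
        ultimately show False using I(1) unfolding indep_def by blast
      qed
    qed
    moreover have fin3: "finite (I \<inter> {pu,pv,pw})" by simp
    ultimately have "card (I \<inter> {pu,pv,pw}) \<le> Suc 0"
      using card_le_Suc0_iff_eq[OF fin3] by (simp only:)
    thus ?thesis by simp
  qed
  have "card I \<le> card (I - {pu,pv,pw}) + card (I \<inter> {pu,pv,pw})"
    by (rule card_split)
  hence c: "int (card (I - {pu,pv,pw})) \<ge> k" using atmost I(2) by linarith
  have "indep G (I - {pu,pv,pw})"
    unfolding indep_def
  proof (intro conjI ballI)
    show "I - {pu,pv,pw} \<subseteq> verts G" using subI by blast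
  next
    fix x y assume "x \<in> I - {pu,pv,pw}" "y \<in> I - {pu,pv,pw}"
    hence "\<not> adj ?G' x y" using I(1) unfolding indep_def by blast
    thus "\<not> adj G x y" unfolding adj_def add_triangle_def edges_def by simp
  qed
  thus "\<exists>I. indep G I \<and> int (card I) \<ge> k" using c by blast
qed

end
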